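(* Let $\mathcal{C}$ be a closed convex set with $\overline\Pi=\mathcal{C}\cap\Pi$ closed and convex. Let $S=(x_1,\dots,x_m)$ be drawn i.i.d. from $\mathcal{D}_{\mathcal{X}}$ and let $\widehat{\mathcal{D}}_{\mathcal{X}}$ be its empirical distribution. Define $$\mathcal{F}=\{x\mapsto\mathsf{B}_F(\pi(x)\parallel\pi_0(x)):\pi\in\overline\Pi\}\cup\{x\mapsto\mathsf{B}_F(\pi'(x)\parallel\pi(x)):\pi,\pi'\in\overline\Pi\},\qquad \epsilon_m=\sup_{f\in\mathcal{F}}\big|\mathbb{E}_{x\sim\mathcal{D}_{\mathcal{X}}}[f(x)]-\mathbb{E}_{x\sim\widehat{\mathcal{D}}_{\mathcal{X}}}[f(x)]\big|.$$ Let $\widehat\pi$ be a minimizer of $\pi\mapsto\mathbb{E}_{x\sim\mathcal{D}_{\mathcal{X}}}[\mathsf{B}_F(\pi(x)\parallel\pi_0(x))]$ over $\overline\Pi$ and $\widehat\pi_S$ a minimizer of $\pi\mapsto\mathbb{E}_{x\sim\widehat{\mathcal{D}}_{\mathcal{X}}}[\mathsf{B}_F(\pi(x)\parallel\pi_0(x))]$ over $\overline\Pi$. Assume $\pi^*\in\overline\Pi$. Then $$\mathbb{E}_{\mathcal{D}_{\mathcal{X}}}[\mathsf{B}_F(\pi^*(x)\parallel\widehat\pi_S(x))]\le\mathbb{E}_{\mathcal{D}_{\mathcal{X}}}[\mathsf{B}_F(\pi^*(x)\parallel\widehat\pi(x))]+6\epsilon_m+\mathbb{E}_{\mathcal{D}_{\mathcal{X}}}\big[\mathsf{B}_F(\pi^*(x)\parallel\pi_0(x))-\mathsf{B}_F(\widehat\pi(x)\parallel\pi_0(x))\big].$$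 In particular, if $\pi^*=\widehat\pi$, then $\mathbb{E}_{\mathcal{D}_{\mathcal{X}}}[\mathsf{B}_F(\pi^*(x)\parallel\widehat\pi_S(x))]\le\mathbb{E}_{\mathcal{D}_{\mathcal{X}}}[\mathsf{B}_F(\pi^*(x)\parallel\widehat\pi(x))]+6\epsilon_m$.
   Context: $\mathcal{X},\mathcal{Y}$ finite; models are maps $\pi\colon\mathcal{X}\to\Delta(\mathcal{Y})$; $\Pi\subseteq\Delta(\mathcal{Y})^{\mathcal{X}}$ closed and convex; $\pi_0$ a baseline model; $\pi^*$ a reference model; $\mathcal{D}_{\mathcal{X}}$ a full-support distribution on $\mathcal{X}$. $F$ is convex and differentiable on the interior of its domain (containing $\Delta(\mathcal{Y})$, relevant values lying where $\nabla F$ is defined), $\mathsf{B}_F(p\parallel q)=F(p)-F(q)-\langle\nabla F(q),p-q\rangle$. *)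

theory Defs
  imports "HOL-Analysis.Analysis" "HOL-Probability.Probability"
begin

definition prob_simplex :: "(real^'y::finite) set" where
  "prob_simplex = {p. (\<forall>y. 0 \<le> p $ y) \<and> (\<Sum>y\<in>UNIV. p $ y) = 1}"

definition models :: "((real^'y)^'x) set" where
  "models = {\<pi>. \<forall>x. \<pi> $ x \<in> prob_simplex}"

definition bregman :: "(real^'y \<Rightarrow> real) \<Rightarrow> real^'y \<Rightarrow> real^'y \<Rightarrow> real" where
  "bregman F p q = F p - F q - frechet_derivative F (at q) (p - q)"

end

theory Submission
  imports Defs
begin

lemma dq:
  fixes F :: "'a::real_normed_vector \<Rightarrow> real"
  assumes "F differentiable (at q)"
  shows "((\<lambda>t. (F (q + t *\<^sub>R v) - F q) / t) \<longlongrightarrow> frechet_derivative F (at q) v) (at_right 0)"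
proof -
  let ?F' = "frechet_derivative F (at q)"
  have d: "(F has_derivative ?F') (at q)" using assms frechet_derivative_works by blast
  have lin: "linear ?F'" using d has_derivative_linear by blast
  have l: "((\<lambda>t::real. q + t *\<^sub>R v) has_derivative (\<lambda>t. t *\<^sub>R v)) (at 0)"
    by (auto intro!: derivative_eq_intros)
  have d0: "(F has_derivative ?F') (at ((\<lambda>t::real. q + t *\<^sub>R v) 0))" using d by simp
  have "((F \<circ> (\<lambda>t::real. q + t *\<^sub>R v)) has_derivative (?F' \<circ> (\<lambda>t. t *\<^sub>R v))) (at 0)"
    by (rule diff_chain_at[OF l d0])
  moreover have "(?F' \<circ> (\<lambda>t. t *\<^sub>R v)) = (\<lambda>t. ?F' v * t)"
    using lin by (auto simp: linear_scale)
  ultimately have "((\<lambda>t. F (q + t *\<^sub>R v)) has_field_derivative ?F' v) (at 0)"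
    by (simp add: has_field_derivative_def o_def)
  hence "((\<lambda>t. F (q + t *\<^sub>R v)) has_field_derivative ?F' v) (at 0 within {0<..})"
    by (rule has_field_derivative_at_within)
  hence "((\<lambda>t. (F (q + t *\<^sub>R v) - F (q + 0 *\<^sub>R v)) / (t - 0)) \<longlongrightarrow> ?F' v) (at 0 within {0<..})"
    by (simp only: has_field_derivative_iff)
  thus ?thesis by simp
qed

lemma ev01: "eventually (\<lambda>t. 0 < t \<and> t < 1) (at_right (0::real))"
  by (auto simp: eventually_at_right[of 0 1] intro: exI[of _ 1])

lemma fd_linear: "F differentiable (at q) \<Longrightarrow> linear (frechet_derivative F (at q))"
  using frechet_derivative_works has_derivative_linear by blast

lemma bregman_nonneg:
  fixes F :: "real^'y \<Rightarrow> real"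
  assumes cv: "convex_on A F" and q: "q \<in> A" and p: "p \<in> A" and d: "F differentiable (at q)"
  shows "0 \<le> bregman F p q"
proof -
  have lim: "((\<lambda>t. (F (q + t *\<^sub>R (p - q)) - F q) / t) \<longlongrightarrow> frechet_derivative F (at q) (p - q)) (at_right 0)"
    by (rule dq[OF d])
  have "eventually (\<lambda>t. (F (q + t *\<^sub>R (p - q)) - F q) / t \<le> F p - F q) (at_right (0::real))"
    using ev01
  proof (rule eventually_mono)
    fix t :: real assume t: "0 < t \<and> t < 1"
    have "q + t *\<^sub>R (p - q) = (1 - t) *\<^sub>R q + t *\<^sub>R p" by (simp add: algebra_simps)
    hence "F (q + t *\<^sub>R (p - q)) \<le> (1 - t) * F q + t * F p"
      using convex_onD[OF cv, of t q p] t q p by simp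
    hence "F (q + t *\<^sub>R (p - q)) - F q \<le> t * (F p - F q)" by (simp add: algebra_simps)
    thus "(F (q + t *\<^sub>R (p - q)) - F q) / t \<le> F p - F q" using t by (simp add: divide_simps mult.commute)
  qed
  hence "frechet_derivative F (at q) (p - q) \<le> F p - F q"
    using tendsto_upperbound[OF lim] by simp
  thus ?thesis unfolding bregman_def by simp
qed

lemma breg_step:
  assumes d: "F differentiable (at c)" and t: "t \<noteq> 0"
  shows "(bregman F (q + t *\<^sub>R v) c - bregman F q c) / t
         = (F (q + t *\<^sub>R v) - F q) / t - frechet_derivative F (at c) v"
proof -
  have lin: "linear (frechet_derivative F (at c))" using fd_linear[OF d] .
  have "frechet_derivative F (at c) (q + t *\<^sub>R v - c)
      = frechet_derivative F (at c) (q - c) + t * frechet_derivative F (at c) v"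
  proof -
    have e: "q + t *\<^sub>R v - c = (q - c) + t *\<^sub>R v" by (simp add: algebra_simps)
    show ?thesis unfolding e linear_add[OF lin] linear_scale[OF lin] by simp
  qed
  thus ?thesis unfolding bregman_def using t by (simp add: field_simps)
qed

lemma three_point:
  assumes db: "F differentiable (at b)" and dc: "F differentiable (at c)"
  shows "bregman F a c = bregman F a b + bregman F b c
           + (frechet_derivative F (at b) (a - b) - frechet_derivative F (at c) (a - b))"
proof -
  have lin: "linear (frechet_derivative F (at c))" using fd_linear[OF dc] .
  have "frechet_derivative F (at c) (a - c)
      = frechet_derivative F (at c) (a - b) + frechet_derivative F (at c) (b - c)"
  proof -
    have e: "a - c = (a - b) + (b - c)" by (simp add: algebra_simps)
    show ?thesis unfolding e linear_add[OF lin] by simp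
  qed
  thus ?thesis unfolding bregman_def by simp
qed

lemma E_sum:
  fixes M :: "'x::finite pmf" and f :: "'x \<Rightarrow> real"
  shows "measure_pmf.expectation M f = (\<Sum>x\<in>UNIV. f x * pmf M x)"
  by (rule integral_measure_pmf_real) auto

lemma opt:
  fixes F :: "real^'y \<Rightarrow> real" and P :: "((real^'y)^'x::finite) set" and M :: "'x pmf"
  assumes cvx: "convex P" and sP: "s \<in> P" and aP: "a \<in> P"
    and ds: "\<forall>x. F differentiable (at (s $ x))" and dc: "\<forall>x. F differentiable (at (c $ x))"
    and smin: "\<forall>\<pi>\<in>P. measure_pmf.expectation M (\<lambda>x. bregman F (s $ x) (c $ x))
                    \<le> measure_pmf.expectation M (\<lambda>x. bregman F (\<pi> $ x) (c $ x))"
  shows "0 \<le> measure_pmf.expectation M (\<lambda>x. frechet_derivative F (at (s $ x)) (a $ x - s $ x)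
                                          - frechet_derivative F (at (c $ x)) (a $ x - s $ x))"
proof -
  define v where "v = (\<lambda>x. a $ x - s $ x)"
  have lim: "((\<lambda>t. \<Sum>x\<in>UNIV. ((F (s $ x + t *\<^sub>R v x) - F (s $ x)) / t - frechet_derivative F (at (c $ x)) (v x)) * pmf M x)
      \<longlongrightarrow> (\<Sum>x\<in>UNIV. (frechet_derivative F (at (s $ x)) (v x) - frechet_derivative F (at (c $ x)) (v x)) * pmf M x)) (at_right 0)"
    by (intro tendsto_sum tendsto_mult tendsto_diff tendsto_const dq ds[rule_format])
  have ev: "eventually (\<lambda>t. 0 \<le> (\<Sum>x\<in>UNIV. ((F (s $ x + t *\<^sub>R v x) - F (s $ x)) / t - frechet_derivative F (at (c $ x)) (v x)) * pmf M x)) (at_right (0::real))"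
    using ev01
  proof (rule eventually_mono)
    fix t :: real assume t: "0 < t \<and> t < 1"
    have "s + t *\<^sub>R (a - s) = (1 - t) *\<^sub>R s + t *\<^sub>R a" by (simp add: algebra_simps)
    also have "\<dots> \<in> P" using cvx sP aP t by (intro convexD) auto
    finally have mem: "s + t *\<^sub>R (a - s) \<in> P" .
    have comp: "(s + t *\<^sub>R (a - s)) $ x = s $ x + t *\<^sub>R v x" for x
      by (simp add: v_def)
    have "(\<Sum>x\<in>UNIV. bregman F (s $ x) (c $ x) * pmf M x) \<le> (\<Sum>x\<in>UNIV. bregman F (s $ x + t *\<^sub>R v x) (c $ x) * pmf M x)"
      using smin[rule_format, OF mem] unfolding E_sum comp .
    hence "0 \<le> ((\<Sum>x\<in>UNIV. bregman F (s $ x + t *\<^sub>R v x) (c $ x) * pmf M x) - (\<Sum>x\<in>UNIV. bregman F (s $ x) (c $ x) * pmf M x)) / t"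
      using t by simp
    also have "\<dots> = (\<Sum>x\<in>UNIV. ((bregman F (s $ x + t *\<^sub>R v x) (c $ x) - bregman F (s $ x) (c $ x)) / t) * pmf M x)"
      by (simp add: sum_subtractf[symmetric] sum_divide_distrib left_diff_distrib)
    also have "\<dots> = (\<Sum>x\<in>UNIV. ((F (s $ x + t *\<^sub>R v x) - F (s $ x)) / t - frechet_derivative F (at (c $ x)) (v x)) * pmf M x)"
      using t by (simp add: breg_step dc)
    finally show "0 \<le> (\<Sum>x\<in>UNIV. ((F (s $ x + t *\<^sub>R v x) - F (s $ x)) / t - frechet_derivative F (at (c $ x)) (v x)) * pmf M x)" .
  qed
  have "0 \<le> (\<Sum>x\<in>UNIV. (frechet_derivative F (at (s $ x)) (v x) - frechet_derivative F (at (c $ x)) (v x)) * pmf M x)"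
    by (rule tendsto_lowerbound[OF lim ev]) simp
  thus ?thesis unfolding E_sum v_def .
qed

lemma core_real:
  fixes F :: "real^'y \<Rightarrow> real" and P :: "((real^'y)^'x::finite) set" and D DS :: "'x pmf" and dom :: "(real^'y) set"
  assumes Fcv: "convex_on dom F" and Fd: "\<forall>p\<in>interior dom. F differentiable (at p)"
    and Pint: "\<forall>\<pi>\<in>P. \<forall>x. \<pi> $ x \<in> interior dom" and cint: "\<forall>x. c $ x \<in> interior dom"
    and cvx: "convex P" and aP: "a \<in> P" and sP: "s \<in> P" and hP: "h \<in> P"
    and hmin: "measure_pmf.expectation D (\<lambda>x. bregman F (h $ x) (c $ x))
               \<le> measure_pmf.expectation D (\<lambda>x. bregman F (s $ x) (c $ x))"
    and smin: "\<forall>\<pi>\<in>P. measure_pmf.expectation DS (\<lambda>x. bregman F (s $ x) (c $ x))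
                    \<le> measure_pmf.expectation DS (\<lambda>x. bregman F (\<pi> $ x) (c $ x))"
    and b1: "\<forall>\<pi>\<in>P. \<bar>measure_pmf.expectation D (\<lambda>x. bregman F (\<pi> $ x) (c $ x))
                   - measure_pmf.expectation DS (\<lambda>x. bregman F (\<pi> $ x) (c $ x))\<bar> \<le> r"
    and b2: "\<forall>\<pi>\<in>P. \<forall>\<pi>'\<in>P. \<bar>measure_pmf.expectation D (\<lambda>x. bregman F (\<pi>' $ x) (\<pi> $ x))
                   - measure_pmf.expectation DS (\<lambda>x. bregman F (\<pi>' $ x) (\<pi> $ x))\<bar> \<le> r"
  shows "measure_pmf.expectation D (\<lambda>x. bregman F (a $ x) (s $ x))
         \<le> measure_pmf.expectation D (\<lambda>x. bregman F (a $ x) (h $ x)) + 6 * r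
           + measure_pmf.expectation D (\<lambda>x. bregman F (a $ x) (c $ x) - bregman F (h $ x) (c $ x))"
proof -
  have ds: "\<forall>x. F differentiable (at (s $ x))" using Fd Pint sP by blast
  have dh: "\<forall>x. F differentiable (at (h $ x))" using Fd Pint hP by blast
  have dc: "\<forall>x. F differentiable (at (c $ x))" using Fd cint by blast
  define X where "X = (\<lambda>x. frechet_derivative F (at (s $ x)) (a $ x - s $ x)
                                          - frechet_derivative F (at (c $ x)) (a $ x - s $ x))"
  have X0: "0 \<le> measure_pmf.expectation DS X"
    unfolding X_def by (rule opt[OF cvx sP aP ds dc smin])
  have pw: "bregman F (a $ x) (c $ x) = bregman F (a $ x) (s $ x) + bregman F (s $ x) (c $ x) + X x" for x
    unfolding X_def by (rule three_point) (use ds dc in auto)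
  have id: "measure_pmf.expectation DS (\<lambda>x. bregman F (a $ x) (c $ x))
     = measure_pmf.expectation DS (\<lambda>x. bregman F (a $ x) (s $ x))
       + measure_pmf.expectation DS (\<lambda>x. bregman F (s $ x) (c $ x)) + measure_pmf.expectation DS X"
    unfolding E_sum pw by (simp add: sum.distrib distrib_right)
  have nn: "0 \<le> measure_pmf.expectation D (\<lambda>x. bregman F (a $ x) (h $ x))"
    unfolding E_sum
  proof (intro sum_nonneg mult_nonneg_nonneg pmf_nonneg)
    fix x
    show "0 \<le> bregman F (a $ x) (h $ x)"
      using bregman_nonneg[OF Fcv, of "h $ x" "a $ x"] Pint aP hP dh interior_subset by blast
  qed
  have dif: "measure_pmf.expectation D (\<lambda>x. bregman F (a $ x) (c $ x) - bregman F (h $ x) (c $ x))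
     = measure_pmf.expectation D (\<lambda>x. bregman F (a $ x) (c $ x)) - measure_pmf.expectation D (\<lambda>x. bregman F (h $ x) (c $ x))"
    unfolding E_sum by (simp add: sum_subtractf left_diff_distrib)
  have "\<bar>measure_pmf.expectation D (\<lambda>x. bregman F (a $ x) (c $ x))
                   - measure_pmf.expectation DS (\<lambda>x. bregman F (a $ x) (c $ x))\<bar> \<le> r" using b1 aP by blast
  moreover have "\<bar>measure_pmf.expectation D (\<lambda>x. bregman F (s $ x) (c $ x))
                   - measure_pmf.expectation DS (\<lambda>x. bregman F (s $ x) (c $ x))\<bar> \<le> r" using b1 sP by blast
  moreover have "\<bar>measure_pmf.expectation D (\<lambda>x. bregman F (a $ x) (s $ x))
                   - measure_pmf.expectation DS (\<lambda>x. bregman F (a $ x) (s $ x))\<bar> \<le> r" using b2 aP sP by blast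
  ultimately show ?thesis using X0 id nn dif hmin by linarith
qed


theorem theorem3:
  fixes F :: "real^'y \<Rightarrow> real"
    and dom :: "(real^'y) set"
    and Pimod C :: "((real^'y)^'x) set"
    and \<pi>0 \<pi>star \<pi>hat \<pi>hatS :: "(real^'y)^'x"
    and D :: "'x::finite pmf"
    and S :: "'x list"
  assumes dom_convex: "convex dom"
    and simplex_dom: "prob_simplex \<subseteq> dom"
    and F_convex: "convex_on dom F"
    and F_diff: "\<forall>p\<in>interior dom. F differentiable (at p)"
    and Pi_models: "Pimod \<subseteq> models" and Pi_closed: "closed Pimod" and Pi_convex: "convex Pimod"
    and C_closed: "closed C" and C_convex: "convex C"
    and Pibar_closed: "closed (C \<inter> Pimod)" and Pibar_convex: "convex (C \<inter> Pimod)"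
    and pi0_model: "\<pi>0 \<in> models"
    and pi0_int: "\<forall>x. \<pi>0 $ x \<in> interior dom"
    and Pibar_int: "\<forall>\<pi>\<in>C \<inter> Pimod. \<forall>x. \<pi> $ x \<in> interior dom"
    and D_full: "set_pmf D = UNIV"
    and S_nonempty: "S \<noteq> []"
    and pihat_in: "\<pi>hat \<in> C \<inter> Pimod"
    and pihat_min: "\<forall>\<pi>\<in>C \<inter> Pimod.
          measure_pmf.expectation D (\<lambda>x. bregman F (\<pi>hat $ x) (\<pi>0 $ x))
          \<le> measure_pmf.expectation D (\<lambda>x. bregman F (\<pi> $ x) (\<pi>0 $ x))"
    and pihatS_in: "\<pi>hatS \<in> C \<inter> Pimod"
    and pihatS_min: "\<forall>\<pi>\<in>C \<inter> Pimod.
          measure_pmf.expectation (pmf_of_multiset (mset S)) (\<lambda>x. bregman F (\<pi>hatS $ x) (\<pi>0 $ x))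
          \<le> measure_pmf.expectation (pmf_of_multiset (mset S)) (\<lambda>x. bregman F (\<pi> $ x) (\<pi>0 $ x))"
    and pistar_in: "\<pi>star \<in> C \<inter> Pimod"
  shows "let Pibar = C \<inter> Pimod;
             DS = pmf_of_multiset (mset S);
             \<F> = {(\<lambda>x. bregman F (\<pi> $ x) (\<pi>0 $ x)) | \<pi>. \<pi> \<in> Pibar}
                 \<union> {(\<lambda>x. bregman F (\<pi>' $ x) (\<pi> $ x)) | \<pi> \<pi>'. \<pi> \<in> Pibar \<and> \<pi>' \<in> Pibar};
             \<epsilon> = (SUP f\<in>\<F>. ereal \<bar>measure_pmf.expectation D f - measure_pmf.expectation DS f\<bar>)
         in ereal (measure_pmf.expectation D (\<lambda>x. bregman F (\<pi>star $ x) (\<pi>hatS $ x)))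
            \<le> ereal (measure_pmf.expectation D (\<lambda>x. bregman F (\<pi>star $ x) (\<pi>hat $ x)))
              + 6 * \<epsilon>
              + ereal (measure_pmf.expectation D
                  (\<lambda>x. bregman F (\<pi>star $ x) (\<pi>0 $ x) - bregman F (\<pi>hat $ x) (\<pi>0 $ x)))
            \<and> (\<pi>star = \<pi>hat \<longrightarrow>
                ereal (measure_pmf.expectation D (\<lambda>x. bregman F (\<pi>star $ x) (\<pi>hatS $ x)))
                \<le> ereal (measure_pmf.expectation D (\<lambda>x. bregman F (\<pi>star $ x) (\<pi>hat $ x)))
                  + 6 * \<epsilon>)"
  proof -
  define FF where "FF = {(\<lambda>x. bregman F (\<pi> $ x) (\<pi>0 $ x)) | \<pi>. \<pi> \<in> C \<inter> Pimod}
                 \<union> {(\<lambda>x. bregman F (\<pi>' $ x) (\<pi> $ x)) | \<pi> \<pi>'. \<pi> \<in> C \<inter> Pimod \<and> \<pi>' \<in> C \<inter> Pimod}"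
  define DS where "DS = pmf_of_multiset (mset S)"
  define eps where "eps = (SUP f\<in>FF. ereal \<bar>measure_pmf.expectation D f - measure_pmf.expectation DS f\<bar>)"
  have bnd: "ereal \<bar>measure_pmf.expectation D f - measure_pmf.expectation DS f\<bar> \<le> eps" if "f \<in> FF" for f
    unfolding eps_def using that by (rule SUP_upper)
  have main: "ereal (measure_pmf.expectation D (\<lambda>x. bregman F (\<pi>star $ x) (\<pi>hatS $ x)))
            \<le> ereal (measure_pmf.expectation D (\<lambda>x. bregman F (\<pi>star $ x) (\<pi>hat $ x)))
              + 6 * eps
              + ereal (measure_pmf.expectation D
                  (\<lambda>x. bregman F (\<pi>star $ x) (\<pi>0 $ x) - bregman F (\<pi>hat $ x) (\<pi>0 $ x)))
            \<and> (\<pi>star = \<pi>hat \<longrightarrow>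
                ereal (measure_pmf.expectation D (\<lambda>x. bregman F (\<pi>star $ x) (\<pi>hatS $ x)))
                \<le> ereal (measure_pmf.expectation D (\<lambda>x. bregman F (\<pi>star $ x) (\<pi>hat $ x)))
                  + 6 * eps)"
  proof (cases eps)
    case (real r)
    have b1: "\<forall>\<pi>\<in>C \<inter> Pimod. \<bar>measure_pmf.expectation D (\<lambda>x. bregman F (\<pi> $ x) (\<pi>0 $ x))
                   - measure_pmf.expectation DS (\<lambda>x. bregman F (\<pi> $ x) (\<pi>0 $ x))\<bar> \<le> r"
    proof
      fix \<pi> assume "\<pi> \<in> C \<inter> Pimod"
      hence "(\<lambda>x. bregman F (\<pi> $ x) (\<pi>0 $ x)) \<in> FF" unfolding FF_def by blast
      from bnd[OF this] real show "\<bar>measure_pmf.expectation D (\<lambda>x. bregman F (\<pi> $ x) (\<pi>0 $ x))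
                   - measure_pmf.expectation DS (\<lambda>x. bregman F (\<pi> $ x) (\<pi>0 $ x))\<bar> \<le> r" by simp
    qed
    have b2: "\<forall>\<pi>\<in>C \<inter> Pimod. \<forall>\<pi>'\<in>C \<inter> Pimod. \<bar>measure_pmf.expectation D (\<lambda>x. bregman F (\<pi>' $ x) (\<pi> $ x))
                   - measure_pmf.expectation DS (\<lambda>x. bregman F (\<pi>' $ x) (\<pi> $ x))\<bar> \<le> r"
    proof (intro ballI)
      fix \<pi> \<pi>' assume "\<pi> \<in> C \<inter> Pimod" "\<pi>' \<in> C \<inter> Pimod"
      hence "(\<lambda>x. bregman F (\<pi>' $ x) (\<pi> $ x)) \<in> FF" unfolding FF_def by blast
      from bnd[OF this] real show "\<bar>measure_pmf.expectation D (\<lambda>x. bregman F (\<pi>' $ x) (\<pi> $ x))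
                   - measure_pmf.expectation DS (\<lambda>x. bregman F (\<pi>' $ x) (\<pi> $ x))\<bar> \<le> r" by simp
    qed
    have R: "measure_pmf.expectation D (\<lambda>x. bregman F (\<pi>star $ x) (\<pi>hatS $ x))
         \<le> measure_pmf.expectation D (\<lambda>x. bregman F (\<pi>star $ x) (\<pi>hat $ x)) + 6 * r
           + measure_pmf.expectation D (\<lambda>x. bregman F (\<pi>star $ x) (\<pi>0 $ x) - bregman F (\<pi>hat $ x) (\<pi>0 $ x))"
      by (rule core_real[OF F_convex F_diff Pibar_int pi0_int Pibar_convex pistar_in pihatS_in pihat_in
            pihat_min[rule_format, OF pihatS_in] pihatS_min[unfolded DS_def[symmetric]] b1 b2])
    show ?thesis using R real by auto
  next
    case PInf
    thus ?thesis by simp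
  next
    case MInf
    have "(\<lambda>x. bregman F (\<pi>hat $ x) (\<pi>0 $ x)) \<in> FF" unfolding FF_def using pihat_in by blast
    from bnd[OF this] MInf show ?thesis by simp
  qed
  show ?thesis using main unfolding Let_def eps_def FF_def DS_def .
qed

end
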